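(* Let $S\neq\mathbb N$ be a numerical semigroup with cyclotomic exponent sequence $\mathbf e$. Then every $d\in\mathcal E(S)$ satisfies $\mathfrak d(d)\ge2$. Moreover, if $\alpha$ is a minimal element of $(\mathcal E(S),\le_S)$, then $e_\alpha=\mathfrak d(\alpha)-1$.
   Context: A numerical semigroup $S$ is a submonoid of $(\mathbb N,+)$ with finite complement, with minimal generating set $A=\{n_1,\dots,n_e\}$. The cyclotomic exponent sequence is the unique integer sequence $(e_j)_{j\ge1}$ with $(1-x)\sum_{s\in S}x^s=\prod_{j\ge1}(1-x^j)^{e_j}$ in $\mathbb Z[[x]]$; $\mathcal E(S)=\{d\in\mathbb N: d\ge2,\ e_d\ne0,\ d\notin A\}$. Write $a\le_S b$ if $b-a\in S$. With $\varphi:\mathbb N^e\to S$, $\varphi(a)=\sum_ia_in_i$, the denumerant of $s\in S$ is $\mathfrak d(s)=|\varphi^{-1}(s)|$, the number of factorizations of $s$. *)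

theory Defs
  imports "HOL-Computational_Algebra.Formal_Power_Series"
begin

definition numerical_semigroup :: "nat set \<Rightarrow> bool" where
  "numerical_semigroup S \<longleftrightarrow> 0 \<in> S \<and> (\<forall>a\<in>S. \<forall>b\<in>S. a + b \<in> S) \<and> finite (UNIV - S)"

definition min_gens :: "nat set \<Rightarrow> nat set" where
  "min_gens S = {a \<in> S. a \<noteq> 0 \<and> \<not> (\<exists>b\<in>S. \<exists>c\<in>S. b \<noteq> 0 \<and> c \<noteq> 0 \<and> a = b + c)}"

definition denumerant :: "nat set \<Rightarrow> nat \<Rightarrow> nat" where
  "denumerant S s = card {f :: nat \<Rightarrow> nat. (\<forall>a. a \<notin> min_gens S \<longrightarrow> f a = 0)
                                \<and> (\<Sum>a\<in>min_gens S. f a * a) = s}"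

definition le_S :: "nat set \<Rightarrow> nat \<Rightarrow> nat \<Rightarrow> bool" where
  "le_S S a b \<longleftrightarrow> a \<le> b \<and> b - a \<in> S"

definition semigroup_poly_fps :: "nat set \<Rightarrow> rat fps" where
  "semigroup_poly_fps S = (1 - fps_X) * Abs_fps (\<lambda>n. if n \<in> S then 1 else 0)"

definition cyc_factor :: "nat \<Rightarrow> int \<Rightarrow> rat fps" where
  "cyc_factor j k = (if k \<ge> 0 then (1 - fps_X ^ j) ^ nat k
                     else inverse ((1 - fps_X ^ j) ^ nat (- k)))"

text \<open>e is the cyclotomic exponent sequence of S: the identity
  (1-x) sum_{s in S} x^s = prod_{j>=1} (1-x^j)^{e_j} holds in the x-adic sense, i.e.
  for every n the n-th coefficients agree with the partial product over j = 1..n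
  (factors with j > n do not affect the coefficient of x^n). The value e 0 is irrelevant.\<close>
definition cyclotomic_exponent_seq :: "nat set \<Rightarrow> (nat \<Rightarrow> int) \<Rightarrow> bool" where
  "cyclotomic_exponent_seq S e \<longleftrightarrow>
     (\<forall>n. fps_nth (semigroup_poly_fps S) n = fps_nth (\<Prod>j\<in>{1..n}. cyc_factor j (e j)) n)"

definition cyc_E :: "nat set \<Rightarrow> (nat \<Rightarrow> int) \<Rightarrow> nat set" where
  "cyc_E S e = {d. d \<ge> 2 \<and> e d \<noteq> 0 \<and> d \<notin> min_gens S}"

end

theory Submission
  imports Defs
begin
unbundle fps_syntax

definition UU :: "nat \<Rightarrow> rat fps" where "UU j = 1 - fps_X ^ j"
definition DD :: "nat \<Rightarrow> rat fps" where "DD j = Abs_fps (\<lambda>i. if j dvd i then 1 else 0)"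

lemma UU_DD: assumes "j \<ge> 1" shows "UU j * DD j = 1"
proof (rule fps_ext)
  fix n
  have "(UU j * DD j) $ n = DD j $ n - (fps_X ^ j * DD j) $ n"
    by (simp add: UU_def algebra_simps)
  also have "\<dots> = (1::rat fps) $ n"
    using assms by (auto simp: fps_X_power_mult_nth DD_def dvd_minus_self)
  finally show "(UU j * DD j) $ n = (1::rat fps) $ n" .
qed

lemma cyc_alt: assumes "j \<ge> 1"
  shows "cyc_factor j k = (if k \<ge> 0 then UU j ^ nat k else DD j ^ nat (-k))"
proof -
  have "inverse (UU j) = DD j" by (rule fps_inverse_unique[OF UU_DD[OF assms]])
  then show ?thesis by (simp add: cyc_factor_def fps_inverse_power UU_def[symmetric])
qed

lemma pw_add: assumes "u * d = (1::rat fps)"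
  shows "(if a \<ge> 0 then u ^ nat a else d ^ nat (-a)) * (if b \<ge> 0 then u ^ nat b else d ^ nat (-b))
       = (if a + b \<ge> 0 then u ^ nat (a+b) else d ^ nat (-(a+b)))"
proof -
  have key: "u ^ p * d ^ q = (if p \<ge> q then u ^ (p - q) else d ^ (q - p))" for p q
  proof (cases "p \<ge> q")
    case True
    have "u ^ p * d ^ q = u ^ (p-q) * (u * d) ^ q"
      using True by (simp add: power_mult_distrib power_add[symmetric] mult_ac)
    then show ?thesis using True assms by simp
  next
    case False
    have "u ^ p * d ^ q = d ^ (q-p) * (u * d) ^ p"
      using False by (simp add: power_mult_distrib power_add[symmetric] mult_ac)
    then show ?thesis using False assms by simp
  qed
  have h1: "nat a - nat (-b) = nat (a+b)" "nat (-b) - nat a = nat (-(a+b))"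
     "(nat (-b) \<le> nat a) = (a + b \<ge> 0)"
    if "a \<ge> 0" "b < 0" for a b :: int using that by auto
  show ?thesis
  proof (cases "a \<ge> 0"; cases "b \<ge> 0")
    assume "a \<ge> 0" "b \<ge> 0" then show ?thesis by (simp add: power_add[symmetric] nat_add_distrib)
  next
    assume "\<not> a \<ge> 0" "\<not> b \<ge> 0" then show ?thesis by (simp add: power_add[symmetric] nat_add_distrib[symmetric])
  next
    assume "a \<ge> 0" "\<not> b \<ge> 0" then show ?thesis using h1[of a b] by (simp add: key)
  next
    assume "\<not> a \<ge> 0" "b \<ge> 0" then show ?thesis using h1[of b a]
      by (simp add: key mult.commute[of "d^_"] add.commute)
  qed
qed

lemma cyc_add: assumes "j \<ge> 1"
  shows "cyc_factor j a * cyc_factor j b = cyc_factor j (a + b)"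
  using pw_add[OF UU_DD[OF assms]] by (simp add: cyc_alt[OF assms])



definition supp_in :: "nat set \<Rightarrow> rat fps \<Rightarrow> bool" where
  "supp_in M f \<longleftrightarrow> (\<forall>i. f $ i \<noteq> 0 \<longrightarrow> i \<in> M)"

definition addcl :: "nat set \<Rightarrow> bool" where
  "addcl M \<longleftrightarrow> 0 \<in> M \<and> (\<forall>a\<in>M. \<forall>b\<in>M. a + b \<in> M)"

lemma supp_mult: assumes "addcl M" "supp_in M f" "supp_in M g" shows "supp_in M (f * g)"
  unfolding supp_in_def
proof (intro allI impI)
  fix n assume "(f * g) $ n \<noteq> 0"
  then have "(\<Sum>i=0..n. f$i * g$(n - i)) \<noteq> 0" by (simp add: fps_mult_nth)
  then obtain i where i: "i \<in> {0..n}" "f$i * g$(n-i) \<noteq> 0" by (meson sum.neutral)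
  then have "i \<in> M" "n - i \<in> M" using assms(2,3) unfolding supp_in_def by auto
  then have "i + (n - i) \<in> M" using assms(1) unfolding addcl_def by blast
  then show "n \<in> M" using i by simp
qed

lemma supp_one: "addcl M \<Longrightarrow> supp_in M 1"
  by (auto simp: supp_in_def addcl_def)

lemma supp_power: "addcl M \<Longrightarrow> supp_in M f \<Longrightarrow> supp_in M (f ^ m)"
  by (induction m) (auto intro: supp_mult supp_one)

lemma addcl_mults: "addcl {i. j dvd i}"
  by (auto simp: addcl_def)

lemma supp_UU: "supp_in {i. j dvd i} (UU j)"
  by (auto simp: supp_in_def UU_def fps_X_power_nth split: if_splits)

lemma supp_DD: "supp_in {i. j dvd i} (DD j)"
  by (auto simp: supp_in_def DD_def split: if_splits)

lemma supp_cyc: assumes "j \<ge> 1" shows "supp_in {i. j dvd i} (cyc_factor j k)"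
  using assms by (auto simp: cyc_alt intro!: supp_power addcl_mults supp_UU supp_DD)

lemma mults_sub: assumes "addcl M" "j \<in> M" shows "{i. j dvd i} \<subseteq> M"
proof
  fix i assume "i \<in> {i. j dvd i}"
  then obtain k where "i = j * k" by auto
  moreover have "j * k \<in> M" for k
    by (induction k) (use assms in \<open>auto simp: addcl_def\<close>)
  ultimately show "i \<in> M" by simp
qed

lemma supp_mono: "supp_in M f \<Longrightarrow> M \<subseteq> M' \<Longrightarrow> supp_in M' f"
  by (auto simp: supp_in_def)

lemma cyc_zero: "cyc_factor j 0 = 1"
  by (simp add: cyc_factor_def)

lemma supp_prod_cyc:
  assumes "finite K" "addcl M" "\<And>j. j \<in> K \<Longrightarrow> j \<ge> 1" "\<And>j. j \<in> K \<Longrightarrow> c j \<noteq> 0 \<Longrightarrow> j \<in> M"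
  shows "supp_in M (\<Prod>j\<in>K. cyc_factor j (c j))"
  using assms
proof (induction K rule: finite_induct)
  case empty then show ?case by (simp add: supp_one)
next
  case (insert x F)
  have "supp_in M (cyc_factor x (c x))"
  proof (cases "c x = 0")
    case True then show ?thesis using insert by (simp add: cyc_zero supp_one)
  next
    case False then show ?thesis
      using insert supp_cyc[of x "c x"] mults_sub[of M x] supp_mono by auto
  qed
  then show ?case using insert by (simp add: supp_mult)
qed

lemma cyc_nth0: assumes "j \<ge> 1" shows "cyc_factor j k $ 0 = 1"
proof -
  have "UU j $ 0 = 1" "DD j $ 0 = 1" using assms by (auto simp: UU_def DD_def)
  then show ?thesis using assms by (simp add: cyc_alt fps_nth_power_0)
qed

lemma prod_cyc_nth0: assumes "\<And>j. j \<in> K \<Longrightarrow> j \<ge> 1" shows "(\<Prod>j\<in>K. cyc_factor j (c j)) $ 0 = 1"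
proof (cases "finite K")
  case True then show ?thesis using assms
    by (induction K rule: finite_induct) (auto simp: cyc_nth0)
qed simp

lemma mult_nth_gap:
  assumes "supp_in {i. a dvd i} f" "a > 0"
  shows "(f * g) $ a = f$0 * g$a + f$a * g$0"
proof -
  have "(f * g) $ a = (\<Sum>i\<in>{0..a}. f$i * g$(a - i))" by (simp add: fps_mult_nth)
  also have "\<dots> = (\<Sum>i\<in>{0,a}. f$i * g$(a - i))"
  proof (rule sum.mono_neutral_right)
    show "\<forall>i\<in>{0..a} - {0, a}. f $ i * g $ (a - i) = 0"
    proof
      fix i assume i: "i \<in> {0..a} - {0, a}"
      then have "\<not> a dvd i" using dvd_imp_le by fastforce
      then show "f $ i * g $ (a - i) = 0" using assms(1) by (auto simp: supp_in_def)
    qed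
  qed auto
  also have "\<dots> = f$0 * g$a + f$a * g$0" using assms(2) by simp
  finally show ?thesis .
qed

lemma power_nth_gap:
  assumes "supp_in {i. a dvd i} u" "a > 0" "u $ 0 = 1"
  shows "(u ^ m) $ a = of_nat m * u $ a"
proof (induction m)
  case 0 then show ?case using assms by simp
next
  case (Suc m)
  have "(u ^ Suc m) $ a = u$0 * (u^m)$a + u$a * (u^m)$0"
    using mult_nth_gap[OF assms(1,2)] by simp
  then show ?case using Suc assms by (simp add: fps_nth_power_0 algebra_simps)
qed

lemma cyc_nth_self: assumes "j \<ge> 1" shows "cyc_factor j k $ j = - of_int k"
proof -
  have u: "UU j $ 0 = 1" "DD j $ 0 = 1" "UU j $ j = -1" "DD j $ j = 1"
    using assms by (auto simp: UU_def DD_def)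
  show ?thesis
    using assms u power_nth_gap[OF supp_UU, of j] power_nth_gap[OF supp_DD, of j]
    by (auto simp: cyc_alt)
qed

definition eqN :: "nat \<Rightarrow> rat fps \<Rightarrow> rat fps \<Rightarrow> bool" where
  "eqN n f g \<longleftrightarrow> (\<forall>i\<le>n. f $ i = g $ i)"

lemma eqN_refl: "eqN n f f" by (simp add: eqN_def)
lemma eqN_sym: "eqN n f g \<Longrightarrow> eqN n g f" by (simp add: eqN_def)
lemma eqN_trans: "eqN n f g \<Longrightarrow> eqN n g h \<Longrightarrow> eqN n f h" by (simp add: eqN_def)

lemma eqN_mult_left: assumes "eqN n f g" shows "eqN n (h * f) (h * g)"
  unfolding eqN_def
proof (intro allI impI)
  fix i assume "i \<le> n"
  have "\<And>k. k \<in> {0..i} \<Longrightarrow> h $ k * f $ (i - k) = h $ k * g $ (i - k)"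
    using assms \<open>i \<le> n\<close> unfolding eqN_def by simp
  then show "(h * f) $ i = (h * g) $ i"
    unfolding fps_mult_nth by (rule sum.cong[OF refl])
qed

lemma eqN_mult_right: "eqN n f g \<Longrightarrow> eqN n (f * h) (g * h)"
  using eqN_mult_left[of n f g h] by (simp only: mult.commute)

lemma eqN_mult: "eqN n f g \<Longrightarrow> eqN n f' g' \<Longrightarrow> eqN n (f * f') (g * g')"
  by (rule eqN_trans[OF eqN_mult_right eqN_mult_left])

lemma eqN_prod: assumes "finite K" "\<And>j. j \<in> K \<Longrightarrow> eqN n (F j) (G j)"
  shows "eqN n (\<Prod>j\<in>K. F j) (\<Prod>j\<in>K. G j)"
  using assms by (induction K rule: finite_induct) (simp_all add: eqN_refl eqN_mult)

lemma eqN_cyc_big: assumes "n < j" shows "eqN n (cyc_factor j k) 1"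
  unfolding eqN_def
proof (intro allI impI)
  fix i assume "i \<le> n"
  show "cyc_factor j k $ i = 1 $ i"
  proof (cases "i = 0")
    case True then show ?thesis using assms cyc_nth0[of j k] by simp
  next
    case False
    have "i < j" using \<open>i \<le> n\<close> assms by simp
    then have "\<not> j dvd i" using False by (auto dest: dvd_imp_le)
    then show ?thesis using supp_cyc[of j k] assms False by (auto simp: supp_in_def)
  qed
qed



definition Fset :: "nat set \<Rightarrow> nat \<Rightarrow> (nat \<Rightarrow> nat) set" where
  "Fset B s = {f. (\<forall>a. a \<notin> B \<longrightarrow> f a = 0) \<and> (\<Sum>a\<in>B. f a * a) = s}"

lemma denumerant_Fset: "denumerant S s = card (Fset (min_gens S) s)"
  by (simp add: denumerant_def Fset_def)

lemma finite_Fset: assumes "finite B" "0 \<notin> B" shows "finite (Fset B s)"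
proof (rule finite_subset)
  show "Fset B s \<subseteq> {f. \<forall>x. (x \<in> B \<longrightarrow> f x \<in> {0..s}) \<and> (x \<notin> B \<longrightarrow> f x = 0)}"
  proof (clarsimp simp: Fset_def)
    fix f :: "nat \<Rightarrow> nat" and x assume f: "\<forall>a. a \<notin> B \<longrightarrow> f a = 0" and x: "x \<in> B"
    then have "f x * x \<le> (\<Sum>a\<in>B. f a * a)" using assms(1) by (intro member_le_sum) auto
    moreover have "f x \<le> f x * x" using x assms(2) by (cases x) auto
    ultimately show "f x \<le> (\<Sum>a\<in>B. f a * a)" by linarith
  qed
  show "finite {f. \<forall>x. (x \<in> B \<longrightarrow> f x \<in> {0..s}) \<and> (x \<notin> B \<longrightarrow> f x = (0::nat))}"
    by (rule finite_set_of_finite_funs) (use assms in auto)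
qed

lemma card_Fset_insert:
  assumes "finite B" "0 \<notin> B" "b \<notin> B" "b \<ge> 1"
  shows "card (Fset (insert b B) s) = (\<Sum>k\<in>{0..s div b}. card (Fset B (s - k * b)))"
proof -
  let ?T = "Sigma {0..s div b} (\<lambda>k. Fset B (s - k * b))"
  have sum_ins: "(\<Sum>a\<in>insert b B. f a * a) = f b * b + (\<Sum>a\<in>B. f a * a)" for f
    using assms by simp
  have sum_upd: "(\<Sum>a\<in>B. (f(b := k)) a * a) = (\<Sum>a\<in>B. f a * a)" for f k
    using assms(3) by (intro sum.cong) auto
  have "bij_betw (\<lambda>f. (f b, f(b := 0))) (Fset (insert b B) s) ?T"
  proof (rule bij_betw_byWitness[where f' = "\<lambda>(k, g). g(b := k)"])
    show "\<forall>f\<in>Fset (insert b B) s. (\<lambda>(k, g). g(b := k)) (f b, f(b := 0)) = f" by auto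
    show "\<forall>p\<in>?T. (\<lambda>f. (f b, f(b := 0))) ((\<lambda>(k, g). g(b := k)) p) = p"
      using assms(3) by (auto simp: Fset_def)
    show "(\<lambda>f. (f b, f(b := 0))) ` Fset (insert b B) s \<subseteq> ?T"
    proof clarsimp
      fix f assume f: "f \<in> Fset (insert b B) s"
      then have e: "f b * b + (\<Sum>a\<in>B. f a * a) = s" by (simp add: Fset_def sum_ins)
      then have "f b * b \<le> s" by linarith
      then have "f b \<le> s div b" using assms(4) by (simp add: less_eq_div_iff_mult_less_eq)
      moreover have "f(b := 0) \<in> Fset B (s - f b * b)"
        using f e sum_upd[of f 0] by (auto simp: Fset_def)
      ultimately show "f b \<le> s div b \<and> f(b := 0) \<in> Fset B (s - f b * b)" by simp
    qed
    show "(\<lambda>(k, g). g(b := k)) ` ?T \<subseteq> Fset (insert b B) s"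
    proof clarsimp
      fix k g assume k: "k \<le> s div b" and g: "g \<in> Fset B (s - k * b)"
      have "k * b \<le> s" using k assms(4) by (simp add: less_eq_div_iff_mult_less_eq)
      then show "g(b := k) \<in> Fset (insert b B) s"
        using g sum_upd[of g k] by (auto simp: Fset_def sum_ins)
    qed
  qed
  then have "card (Fset (insert b B) s) = card ?T" by (rule bij_betw_same_card)
  also have "\<dots> = (\<Sum>k\<in>{0..s div b}. card (Fset B (s - k * b)))"
    by (rule card_SigmaI) (auto intro: finite_Fset[OF assms(1,2)])
  finally show ?thesis .
qed

lemma prod_DD: assumes "finite B" "0 \<notin> B"
  shows "(\<Prod>a\<in>B. DD a) = Abs_fps (\<lambda>s. of_nat (card (Fset B s)))"
  using assms
proof (induction B rule: finite_induct)
  case empty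
  have "Fset {} s = (if s = 0 then {\<lambda>_. 0} else {})" for s
    by (auto simp: Fset_def)
  then show ?case by (intro fps_ext) auto
next
  case (insert b B)
  have b: "b \<ge> 1" using insert by (cases b) auto
  show ?case
  proof (rule fps_ext)
    fix s
    have "(\<Prod>a\<in>insert b B. DD a) $ s = (DD b * Abs_fps (\<lambda>s. of_nat (card (Fset B s)))) $ s"
      using insert by simp
    also have "\<dots> = (\<Sum>i\<in>{0..s}. (if b dvd i then of_nat (card (Fset B (s - i))) else 0))"
    proof -
      have "\<And>i. DD b $ i * of_nat (card (Fset B (s - i))) = (if b dvd i then of_nat (card (Fset B (s - i))) else (0::rat))"
        by (simp add: DD_def)
      then show ?thesis by (simp add: fps_mult_nth)
    qed
    also have "\<dots> = (\<Sum>i\<in>{i\<in>{0..s}. b dvd i}. of_nat (card (Fset B (s - i))))"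
      by (subst sum.inter_filter) auto
    also have "\<dots> = (\<Sum>k\<in>{0..s div b}. of_nat (card (Fset B (s - k * b))))"
    proof (rule sum.reindex_bij_witness[where i = "\<lambda>k. k * b" and j = "\<lambda>i. i div b"])
      show "\<And>a. a \<in> {0..s div b} \<Longrightarrow> a * b div b = a" using b by simp
      show "\<And>a. a \<in> {0..s div b} \<Longrightarrow> a * b \<in> {i \<in> {0..s}. b dvd i}"
        using b by (auto simp: less_eq_div_iff_mult_less_eq)
      show "\<And>a. a \<in> {i \<in> {0..s}. b dvd i} \<Longrightarrow> a div b * b = a" by auto
      show "\<And>a. a \<in> {i \<in> {0..s}. b dvd i} \<Longrightarrow> a div b \<in> {0..s div b}"
        by (auto intro: div_le_mono)
    qed auto
    also have "\<dots> = of_nat (card (Fset (insert b B) s))"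
      using insert b by (simp add: card_Fset_insert)
    finally show "(\<Prod>a\<in>insert b B. DD a) $ s = Abs_fps (\<lambda>s. of_nat (card (Fset (insert b B) s))) $ s"
      by simp
  qed
qed



inductive_set mon :: "nat set \<Rightarrow> nat set" for K where
  mon0: "0 \<in> mon K"
| monS: "j \<in> K \<Longrightarrow> m \<in> mon K \<Longrightarrow> j + m \<in> mon K"

lemma addcl_mon: "addcl (mon K)"
  unfolding addcl_def
proof (intro conjI ballI)
  show "0 \<in> mon K" by (rule mon0)
  fix a b assume "a \<in> mon K" "b \<in> mon K"
  then show "a + b \<in> mon K"
    by (induction a rule: mon.induct) (auto simp: add.assoc intro: monS)
qed

lemma sub_mon: "j \<in> K \<Longrightarrow> j \<in> mon K"
  using monS[OF _ mon0] by simp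

lemma mon_sub: assumes "addcl M" "K \<subseteq> M" shows "mon K \<subseteq> M"
proof
  fix m assume "m \<in> mon K" then show "m \<in> M"
    by (induction m rule: mon.induct) (use assms in \<open>auto simp: addcl_def\<close>)
qed

lemma mon_dec: assumes "m \<in> mon K" "m \<noteq> 0" shows "\<exists>\<beta>\<in>K. \<beta> \<le> m \<and> m - \<beta> \<in> mon K"
  using assms
proof cases
  case (monS j m')
  then show ?thesis by (intro bexI[of _ j]) auto
qed simp

lemma mon_mono: "K \<subseteq> K' \<Longrightarrow> mon K \<subseteq> mon K'"
proof
  assume KK: "K \<subseteq> K'"
  fix m assume "m \<in> mon K" then show "m \<in> mon K'"
    by (induction m rule: mon.induct) (use KK in \<open>auto intro: mon0 monS\<close>)
qed

context
  fixes S :: "nat set"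
  assumes ns: "numerical_semigroup S" and nU: "S \<noteq> UNIV"
begin

lemma addcl_S: "addcl S"
  using ns by (simp add: addcl_def numerical_semigroup_def)

lemma one_notin: "1 \<notin> S"
proof
  assume "1 \<in> S"
  have "n \<in> S" for n
  proof (induction n)
    case 0 then show ?case using ns by (simp add: numerical_semigroup_def)
  next
    case (Suc n) then show ?case using \<open>1 \<in> S\<close> addcl_S by (auto simp: addcl_def)
  qed
  then show False using nU by auto
qed

lemma zero_in: "0 \<in> S" using addcl_S by (simp add: addcl_def)

lemma gens_S: "min_gens S \<subseteq> S" by (auto simp: min_gens_def)

lemma gens_ge2: assumes "a \<in> min_gens S" shows "a \<ge> 2"
proof -
  have "a \<noteq> 0" "a \<noteq> 1" using assms one_notin by (auto simp: min_gens_def)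
  then show ?thesis by linarith
qed

lemma big_in: obtains c where "c \<ge> 1" "\<And>n. n \<ge> c \<Longrightarrow> n \<in> S"
proof -
  have fin: "finite (UNIV - S)" using ns by (simp add: numerical_semigroup_def)
  define c where "c = Max (UNIV - S) + 1"
  have "n \<in> S" if "n \<ge> c" for n
  proof (rule ccontr)
    assume "n \<notin> S" then have "n \<le> Max (UNIV - S)" using fin by (auto intro: Max_ge)
    then show False using that by (simp add: c_def)
  qed
  moreover have "c \<ge> 1" by (simp add: c_def)
  ultimately show ?thesis using that by blast
qed

lemma finite_gens: "finite (min_gens S)"
proof -
  obtain c where c: "c \<ge> 1" "\<And>n. n \<ge> c \<Longrightarrow> n \<in> S" using big_in by blast
  have "min_gens S \<subseteq> {..<2*c}"
  proof
    fix a assume a: "a \<in> min_gens S"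
    show "a \<in> {..<2*c}"
    proof (rule ccontr)
      assume "a \<notin> {..<2*c}"
      then have "a \<ge> 2*c" by simp
      then have "c \<in> S" "a - c \<in> S" "c \<noteq> 0" "a - c \<noteq> 0" "a = c + (a - c)" using c by auto
      then show False using a unfolding min_gens_def by blast
    qed
  qed
  then show ?thesis by (rule finite_subset) simp
qed

lemma zero_notin_gens: "0 \<notin> min_gens S" by (simp add: min_gens_def)

lemma mult_in: "x \<in> S \<Longrightarrow> k * x \<in> S"
  by (induction k) (use addcl_S zero_in in \<open>auto simp: addcl_def\<close>)

lemma sum_in: assumes "finite B" "B \<subseteq> S" shows "(\<Sum>a\<in>B. f a * a) \<in> S"
  using assms by (induction B rule: finite_induct)
    (use addcl_S zero_in mult_in in \<open>auto simp: addcl_def\<close>)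

lemma Fset_in: "f \<in> Fset (min_gens S) s \<Longrightarrow> s \<in> S"
  using sum_in[OF finite_gens gens_S] by (auto simp: Fset_def)

lemma Fset_ne: "s \<in> S \<Longrightarrow> Fset (min_gens S) s \<noteq> {}"
proof (induction s rule: less_induct)
  case (less s)
  let ?A = "min_gens S"
  show ?case
  proof (cases "s = 0")
    case True
    then have "(\<lambda>_. 0) \<in> Fset ?A s" by (simp add: Fset_def)
    then show ?thesis by blast
  next
    case False
    show ?thesis
    proof (cases "s \<in> ?A")
      case True
      have "(\<Sum>a\<in>?A. (if a = s then 1 else 0) * a) = s"
      proof -
        have "(\<Sum>a\<in>?A. (if a = s then 1 else 0) * a) = (\<Sum>a\<in>?A. (if a = s then a else 0))"
          by (rule sum.cong) auto
        then show ?thesis using True finite_gens by (simp add: sum.delta)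
      qed
      then have "(\<lambda>a. if a = s then 1 else 0) \<in> Fset ?A s"
        using True by (simp add: Fset_def)
      then show ?thesis by blast
    next
      case nA: False
      then obtain b c where bc: "b \<in> S" "c \<in> S" "b \<noteq> 0" "c \<noteq> 0" "s = b + c"
        using less.prems False by (auto simp: min_gens_def)
      then obtain f g where f: "f \<in> Fset ?A b" and g: "g \<in> Fset ?A c"
        using less.IH[of b] less.IH[of c] by fastforce
      have "(\<lambda>a. f a + g a) \<in> Fset ?A s"
        using f g bc by (auto simp: Fset_def sum.distrib add_mult_distrib)
      then show ?thesis by blast
    qed
  qed
qed

lemma Fset_atom: assumes a: "a \<in> min_gens S" shows "card (Fset (min_gens S) a) = 1"
proof -
  let ?A = "min_gens S"
  let ?d = "\<lambda>x. if x = a then 1 else (0::nat)"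
  have "Fset ?A a \<subseteq> {?d}"
  proof
    fix f assume f: "f \<in> Fset ?A a"
    then have fs: "(\<Sum>x\<in>?A. f x * x) = a" and fz: "\<forall>x. x \<notin> ?A \<longrightarrow> f x = 0"
      by (auto simp: Fset_def)
    have "a \<noteq> 0" using a by (simp add: min_gens_def)
    have "\<exists>x\<in>?A. f x * x \<noteq> 0"
    proof (rule ccontr)
      assume "\<not> (\<exists>x\<in>?A. f x * x \<noteq> 0)"
      then have "(\<Sum>x\<in>?A. f x * x) = 0" by (intro sum.neutral) blast
      then show False using fs \<open>a \<noteq> 0\<close> by simp
    qed
    then obtain b where b: "b \<in> ?A" "f b \<noteq> 0" by auto
    define f' where "f' = f(b := f b - 1)"
    have "(\<Sum>x\<in>?A. f x * x) = f b * b + (\<Sum>x\<in>?A - {b}. f x * x)"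
      using b finite_gens by (simp add: sum.remove)
    moreover have "(\<Sum>x\<in>?A. f' x * x) = f' b * b + (\<Sum>x\<in>?A - {b}. f' x * x)"
      using b finite_gens by (simp add: sum.remove)
    moreover have "(\<Sum>x\<in>?A - {b}. f' x * x) = (\<Sum>x\<in>?A - {b}. f x * x)"
      by (intro sum.cong) (auto simp: f'_def)
    moreover have "f b * b = b + f' b * b" using b(2) by (cases "f b") (auto simp: f'_def)
    ultimately have eq: "a = b + (\<Sum>x\<in>?A. f' x * x)" using fs by linarith
    have r: "(\<Sum>x\<in>?A. f' x * x) \<in> S" by (rule sum_in[OF finite_gens gens_S])
    have bS: "b \<in> S" "b \<noteq> 0" using b(1) gens_S gens_ge2[OF b(1)] by auto
    have atom: "\<not> (\<exists>b\<in>S. \<exists>c\<in>S. b \<noteq> 0 \<and> c \<noteq> 0 \<and> a = b + c)"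
      using a by (simp add: min_gens_def)
    have r0: "(\<Sum>x\<in>?A. f' x * x) = 0"
    proof (rule ccontr)
      assume "(\<Sum>x\<in>?A. f' x * x) \<noteq> 0"
      then have "\<exists>b\<in>S. \<exists>c\<in>S. b \<noteq> 0 \<and> c \<noteq> 0 \<and> a = b + c"
        using eq r bS by blast
      then show False using atom by blast
    qed
    then have ba: "b = a" using eq by simp
    have "\<forall>x\<in>?A. f' x * x = 0" using r0 finite_gens by simp
    then have "\<forall>x\<in>?A. f' x = 0" using zero_notin_gens by fastforce
    then show "f \<in> {?d}"
    proof -
      have "f x = ?d x" for x
      proof (cases "x \<in> ?A")
        case True
        then have "f' x = 0" using \<open>\<forall>x\<in>?A. f' x = 0\<close> by blast
        then show ?thesis using b(2) ba by (auto simp: f'_def split: if_splits)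
      next
        case False then show ?thesis using fz a by auto
      qed
      then show ?thesis by auto
    qed
  qed
  moreover have "Fset ?A a \<noteq> {}" using Fset_ne a gens_S by auto
  ultimately have "Fset ?A a = {?d}" by blast
  then show ?thesis by simp
qed

lemma Fset_mono: assumes "le_S S \<alpha> d" "\<alpha> \<in> S"
  shows "card (Fset (min_gens S) \<alpha>) \<le> card (Fset (min_gens S) d)"
proof -
  let ?A = "min_gens S"
  have "d - \<alpha> \<in> S" using assms by (simp add: le_S_def)
  then obtain g where g: "g \<in> Fset ?A (d - \<alpha>)" using Fset_ne by blast
  show ?thesis
  proof (rule card_inj_on_le)
    show "inj_on (\<lambda>f x. f x + g x) (Fset ?A \<alpha>)"
      by (rule inj_onI) (simp add: fun_eq_iff)
    show "(\<lambda>f x. f x + g x) ` Fset ?A \<alpha> \<subseteq> Fset ?A d"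
      using g assms by (auto simp: Fset_def sum.distrib add_mult_distrib le_S_def)
    show "finite (Fset ?A d)" by (rule finite_Fset[OF finite_gens zero_notin_gens])
  qed
qed

end


context
  fixes S :: "nat set" and e :: "nat \<Rightarrow> int"
  assumes ns: "numerical_semigroup S" and nU: "S \<noteq> UNIV" and ces: "cyclotomic_exponent_seq S e"
begin

definition Hs :: "rat fps" where "Hs = Abs_fps (\<lambda>n. if n \<in> S then 1 else 0)"
definition Q :: "nat \<Rightarrow> rat fps" where "Q N = (\<Prod>j\<in>{2..N}. cyc_factor j (e j))"

lemma P_eq: "semigroup_poly_fps S = UU 1 * Hs"
  by (simp add: semigroup_poly_fps_def UU_def Hs_def)

lemma ces': "semigroup_poly_fps S $ n = (\<Prod>j\<in>{1..n}. cyc_factor j (e j)) $ n"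
  using ces by (simp add: cyclotomic_exponent_seq_def)

lemma e1: "e 1 = 1"
proof -
  have "semigroup_poly_fps S $ 1 = Hs $ 1 - (fps_X * Hs) $ 1"
    by (simp add: P_eq UU_def algebra_simps)
  also have "\<dots> = -1"
    using one_notin[OF ns nU] zero_in[OF ns nU] by (simp add: Hs_def fps_X_mult_nth)
  finally have "semigroup_poly_fps S $ 1 = -1" .
  moreover have "semigroup_poly_fps S $ 1 = - of_int (e 1)"
    using ces'[of 1] cyc_nth_self[of 1 "e 1"] by simp
  ultimately have "(of_int (e 1) :: rat) = of_int 1" by simp
  then show ?thesis by (simp only: of_int_eq_iff)
qed

lemma trunc: "eqN N (semigroup_poly_fps S) (\<Prod>j\<in>{1..N}. cyc_factor j (e j))"
  unfolding eqN_def
proof (intro allI impI)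
  fix n assume n: "n \<le> N"
  have "eqN n (\<Prod>j\<in>{1..N}. cyc_factor j (e j)) (\<Prod>j\<in>{1..N}. (if j \<le> n then cyc_factor j (e j) else 1))"
    by (rule eqN_prod) (auto simp: eqN_refl intro: eqN_cyc_big)
  also have "(\<Prod>j\<in>{1..N}. (if j \<le> n then cyc_factor j (e j) else 1)) = (\<Prod>j\<in>{j\<in>{1..N}. j \<le> n}. cyc_factor j (e j))"
    by (subst prod.inter_filter) auto
  also have "{j\<in>{1..N}. j \<le> n} = {1..n}" using n by auto
  finally have "eqN n (\<Prod>j\<in>{1..N}. cyc_factor j (e j)) (\<Prod>j\<in>{1..n}. cyc_factor j (e j))" .
  then show "semigroup_poly_fps S $ n = (\<Prod>j\<in>{1..N}. cyc_factor j (e j)) $ n"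
    using ces'[of n] by (simp add: eqN_def)
qed

lemma HQ: assumes "N \<ge> 1" shows "eqN N Hs (Q N)"
proof -
  have "{1..N} = insert 1 {2..N}" using assms by auto
  then have "(\<Prod>j\<in>{1..N}. cyc_factor j (e j)) = cyc_factor 1 (e 1) * Q N"
    by (simp add: Q_def)
  also have "cyc_factor 1 (e 1) = UU 1" using e1 cyc_alt[of 1 1] by simp
  finally have "eqN N (UU 1 * Hs) (UU 1 * Q N)" using trunc[of N] by (simp add: P_eq)
  then have "eqN N (DD 1 * (UU 1 * Hs)) (DD 1 * (UU 1 * Q N))" by (rule eqN_mult_left)
  moreover have "DD 1 * UU 1 = 1" using UU_DD[of 1] by (simp add: mult.commute)
  ultimately show ?thesis by (simp add: mult.assoc[symmetric])
qed

lemma split_top: fixes d :: nat assumes "d \<ge> 2" shows "{2..d} = insert d {2..<d}" "d \<notin> {2..<d}"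
  using assms by auto

lemma step0: "d \<ge> 2 \<Longrightarrow> e d \<noteq> 0 \<Longrightarrow> d \<in> S"
proof (induction d rule: less_induct)
  case (less d)
  show ?case
  proof (rule ccontr)
    assume dS: "d \<notin> S"
    let ?Q' = "\<Prod>j\<in>{2..<d}. cyc_factor j (e j)"
    have "Q d = cyc_factor d (e d) * ?Q'" using split_top[OF less.prems(1)] by (simp add: Q_def)
    then have "Q d $ d = ?Q' $ d - of_int (e d)"
      using mult_nth_gap[OF supp_cyc, of d "e d" ?Q'] less.prems cyc_nth0[of d "e d"]
        cyc_nth_self[of d "e d"] prod_cyc_nth0[of "{2..<d}" e] by simp
    moreover have "supp_in S ?Q'"
      by (rule supp_prod_cyc) (use less.IH addcl_S[OF ns nU] in auto)
    then have "?Q' $ d = 0" using dS by (auto simp: supp_in_def)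
    moreover have "Q d $ d = Hs $ d" using HQ[of d] less.prems by (simp add: eqN_def)
    moreover have "Hs $ d = 0" using dS by (simp add: Hs_def)
    ultimately show False using less.prems by simp
  qed
qed

end


context
  fixes S :: "nat set" and e :: "nat \<Rightarrow> int"
  assumes ns: "numerical_semigroup S" and nU: "S \<noteq> UNIV" and ces: "cyclotomic_exponent_seq S e"
begin

definition cc :: "nat \<Rightarrow> int" where
  "cc j = - e j - (if j \<in> min_gens S then 1 else 0)"
definition W :: "nat \<Rightarrow> rat fps" where "W N = (\<Prod>j\<in>{2..N}. cyc_factor j (cc j))"

lemma DD_cyc: "j \<ge> 1 \<Longrightarrow> DD j = cyc_factor j (-1)"
  by (simp add: cyc_alt)

lemma G_eq: assumes "N \<ge> 1"
  shows "eqN N (Abs_fps (\<lambda>s. of_nat (card (Fset (min_gens S) s)))) (Hs S * W N)"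
proof -
  let ?A = "min_gens S"
  have A2: "\<And>a. a \<in> ?A \<Longrightarrow> a \<ge> 2" using gens_ge2[OF ns nU] by blast
  have "Abs_fps (\<lambda>s. of_nat (card (Fset ?A s))) = (\<Prod>a\<in>?A. DD a)"
    by (rule prod_DD[symmetric, OF finite_gens[OF ns nU] zero_notin_gens[OF ns nU]])
  moreover have "eqN N (\<Prod>a\<in>?A. DD a) (\<Prod>a\<in>?A. (if a \<le> N then DD a else 1))"
  proof (rule eqN_prod[OF finite_gens[OF ns nU]])
    fix a assume a: "a \<in> ?A"
    show "eqN N (DD a) (if a \<le> N then DD a else 1)"
      using A2[OF a] DD_cyc[of a] eqN_cyc_big[of N a "-1"] by (auto simp: eqN_refl)
  qed
  moreover have "(\<Prod>a\<in>?A. (if a \<le> N then DD a else 1)) = (\<Prod>a\<in>{a\<in>?A. a \<le> N}. DD a)"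
    by (subst prod.inter_filter) (auto simp: finite_gens[OF ns nU])
  moreover have "{a\<in>?A. a \<le> N} = {j\<in>{2..N}. j \<in> ?A}" using A2 by auto
  moreover have "(\<Prod>j\<in>{j\<in>{2..N}. j \<in> ?A}. DD j) = (\<Prod>j\<in>{2..N}. (if j \<in> ?A then DD j else 1))"
    by (subst prod.inter_filter) auto
  moreover have "(\<Prod>j\<in>{2..N}. (if j \<in> ?A then DD j else 1)) = Q e N * W N"
  proof -
    have "Q e N * W N = (\<Prod>j\<in>{2..N}. cyc_factor j (e j) * cyc_factor j (cc j))"
      by (simp add: Q_def[OF ns nU ces] W_def prod.distrib)
    also have "\<dots> = (\<Prod>j\<in>{2..N}. (if j \<in> ?A then DD j else 1))"
    proof (rule prod.cong[OF refl])
      fix j assume "j \<in> {2..N}"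
      then have j: "j \<ge> 1" by simp
      show "cyc_factor j (e j) * cyc_factor j (cc j) = (if j \<in> ?A then DD j else 1)"
        using j by (simp add: cyc_add cc_def DD_cyc cyc_zero)
    qed
    finally show ?thesis by simp
  qed
  moreover have "eqN N (Q e N * W N) (Hs S * W N)"
    by (rule eqN_mult_right[OF eqN_sym[OF HQ[OF ns nU ces assms]]])
  ultimately show ?thesis by (metis eqN_trans)
qed

lemma core:
  assumes a2: "\<alpha> \<ge> 2" and aS: "\<alpha> \<in> S"
    and JS: "{j\<in>{2..\<alpha>}. cc j \<noteq> 0} \<subseteq> S"
    and min: "\<And>\<beta>. \<beta> \<in> {j\<in>{2..\<alpha>}. cc j \<noteq> 0} \<Longrightarrow> \<beta> \<le> \<alpha> \<Longrightarrow> \<alpha> - \<beta> \<in> S \<Longrightarrow> \<beta> = \<alpha>"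
  shows "(Hs S * W \<alpha>) $ \<alpha> = 1 - of_int (cc \<alpha>)"
proof -
  define J where "J = {j\<in>{2..\<alpha>}. cc j \<noteq> 0}"
  have monS: "mon J \<subseteq> S" using mon_sub[OF addcl_S[OF ns nU]] JS by (simp add: J_def)
  have suppW: "supp_in (mon J) (W \<alpha>)" unfolding W_def
    by (rule supp_prod_cyc) (auto simp: J_def addcl_mon intro: sub_mon)
  have W0: "W \<alpha> $ 0 = 1" unfolding W_def by (rule prod_cyc_nth0) auto
  have "(Hs S * W \<alpha>) $ \<alpha> = (\<Sum>i\<in>{0..\<alpha>}. Hs S $ i * W \<alpha> $ (\<alpha> - i))" by (simp add: fps_mult_nth)
  also have "\<dots> = (\<Sum>i\<in>{0, \<alpha>}. Hs S $ i * W \<alpha> $ (\<alpha> - i))"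
  proof (rule sum.mono_neutral_right)
    show "\<forall>i\<in>{0..\<alpha>} - {0, \<alpha>}. Hs S $ i * W \<alpha> $ (\<alpha> - i) = 0"
    proof (rule ballI, rule ccontr)
      fix i assume i: "i \<in> {0..\<alpha>} - {0, \<alpha>}" and nz: "Hs S $ i * W \<alpha> $ (\<alpha> - i) \<noteq> 0"
      then have "Hs S $ i \<noteq> 0" by auto
      then have iS: "i \<in> S" by (simp add: Hs_def[OF ns nU ces] split: if_splits)
      have m: "\<alpha> - i \<in> mon J" using nz suppW by (auto simp: supp_in_def)
      have "\<alpha> - i \<noteq> 0" using i by auto
      then obtain \<beta> where b: "\<beta> \<in> J" "\<beta> \<le> \<alpha> - i" "\<alpha> - i - \<beta> \<in> mon J"
        using mon_dec[OF m] by blast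
      have "i + (\<alpha> - i - \<beta>) \<in> S" using iS b(3) monS addcl_S[OF ns nU] by (auto simp: addcl_def)
      moreover have "i + (\<alpha> - i - \<beta>) = \<alpha> - \<beta>" using b(2) i by auto
      ultimately have "\<beta> = \<alpha>" using min[of \<beta>] b by (auto simp: J_def)
      then show False using b(2) i by auto
    qed
  qed auto
  also have "\<dots> = W \<alpha> $ \<alpha> + 1"
    using a2 aS zero_in[OF ns nU] W0 by (simp add: Hs_def[OF ns nU ces])
  also have "W \<alpha> $ \<alpha> = - of_int (cc \<alpha>)"
  proof -
    let ?W' = "\<Prod>j\<in>{2..<\<alpha>}. cyc_factor j (cc j)"
    have "W \<alpha> = cyc_factor \<alpha> (cc \<alpha>) * ?W'" using split_top[OF ns nU ces a2] by (simp add: W_def)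
    then have e1: "W \<alpha> $ \<alpha> = ?W' $ \<alpha> - of_int (cc \<alpha>)"
      using mult_nth_gap[OF supp_cyc, of \<alpha> "cc \<alpha>" ?W'] a2 cyc_nth0[of \<alpha> "cc \<alpha>"]
        cyc_nth_self[of \<alpha> "cc \<alpha>"] prod_cyc_nth0[of "{2..<\<alpha>}" cc] by simp
    define J' where "J' = {j\<in>{2..<\<alpha>}. cc j \<noteq> 0}"
    have suppW': "supp_in (mon J') ?W'"
      by (rule supp_prod_cyc) (auto simp: J'_def addcl_mon intro: sub_mon)
    have "?W' $ \<alpha> = 0"
    proof (rule ccontr)
      assume "?W' $ \<alpha> \<noteq> 0"
      then have m: "\<alpha> \<in> mon J'" using suppW' by (auto simp: supp_in_def)
      then obtain \<beta> where b: "\<beta> \<in> J'" "\<beta> \<le> \<alpha>" "\<alpha> - \<beta> \<in> mon J'"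
        using mon_dec[OF m] a2 by auto
      have "J' \<subseteq> J" by (auto simp: J'_def J_def)
      then have "\<alpha> - \<beta> \<in> S" using b(3) mon_mono monS by blast
      then have "\<beta> = \<alpha>" using min[of \<beta>] b \<open>J' \<subseteq> J\<close> by (auto simp: J_def)
      then show False using b(1) by (auto simp: J'_def)
    qed
    then show ?thesis using e1 by simp
  qed
  finally show ?thesis by simp
qed

end


context
  fixes S :: "nat set" and e :: "nat \<Rightarrow> int"
  assumes ns: "numerical_semigroup S" and nU: "S \<noteq> UNIV" and ces: "cyclotomic_exponent_seq S e"
begin

lemma card_core:
  assumes a2: "\<alpha> \<ge> 2" and aS: "\<alpha> \<in> S"
    and JS: "{j\<in>{2..\<alpha>}. cc S e j \<noteq> 0} \<subseteq> S"
    and min: "\<And>\<beta>. \<beta> \<in> {j\<in>{2..\<alpha>}. cc S e j \<noteq> 0} \<Longrightarrow> \<beta> \<le> \<alpha> \<Longrightarrow> \<alpha> - \<beta> \<in> S \<Longrightarrow> \<beta> = \<alpha>"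
  shows "int (card (Fset (min_gens S) \<alpha>)) = 1 - cc S e \<alpha>"
proof -
  have "(of_nat (card (Fset (min_gens S) \<alpha>)) :: rat) = (Hs S * W S e \<alpha>) $ \<alpha>"
    using G_eq[OF ns nU ces, of \<alpha>] a2 by (simp add: eqN_def)
  also have "\<dots> = 1 - of_int (cc S e \<alpha>)" by (rule core[OF ns nU ces a2 aS JS min])
  finally have "(of_int (int (card (Fset (min_gens S) \<alpha>))) :: rat) = of_int (1 - cc S e \<alpha>)" by simp
  then show ?thesis by (simp only: of_int_eq_iff)
qed

lemma atom_e: assumes a: "a \<in> min_gens S" shows "e a = -1"
proof -
  have a2: "a \<ge> 2" using gens_ge2[OF ns nU a] .
  have aS: "a \<in> S" using a gens_S[OF ns nU] by blast
  have atom: "\<not> (\<exists>b\<in>S. \<exists>c\<in>S. b \<noteq> 0 \<and> c \<noteq> 0 \<and> a = b + c)"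
    using a by (simp add: min_gens_def)
  have JS: "{j\<in>{2..a}. cc S e j \<noteq> 0} \<subseteq> S"
  proof
    fix j assume j: "j \<in> {j\<in>{2..a}. cc S e j \<noteq> 0}"
    show "j \<in> S"
    proof (cases "j \<in> min_gens S")
      case True then show ?thesis using gens_S[OF ns nU] by blast
    next
      case False
      then have "e j \<noteq> 0" using j by (simp add: cc_def[OF ns nU ces])
      then show ?thesis using step0[OF ns nU ces] j by auto
    qed
  qed
  have "int (card (Fset (min_gens S) a)) = 1 - cc S e a"
  proof (rule card_core[OF a2 aS JS])
    fix \<beta> assume b: "\<beta> \<in> {j\<in>{2..a}. cc S e j \<noteq> 0}" "\<beta> \<le> a" "a - \<beta> \<in> S"
    have "\<beta> \<in> S" using b(1) JS by blast
    show "\<beta> = a"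
    proof (rule ccontr)
      assume "\<beta> \<noteq> a"
      then have "a - \<beta> \<noteq> 0" "\<beta> \<noteq> 0" "a = \<beta> + (a - \<beta>)" using b by auto
      then show False using atom \<open>\<beta> \<in> S\<close> b(3) by blast
    qed
  qed
  then show ?thesis using Fset_atom[OF ns nU a] a by (simp add: cc_def[OF ns nU ces])
qed

lemma cc_E: assumes "j \<ge> 2" "cc S e j \<noteq> 0" shows "j \<in> cyc_E S e" "cc S e j = - e j"
proof -
  have "j \<notin> min_gens S"
  proof
    assume "j \<in> min_gens S" then have "e j = -1" by (rule atom_e)
    then show False using assms \<open>j \<in> min_gens S\<close> by (simp add: cc_def[OF ns nU ces])
  qed
  then show "j \<in> cyc_E S e" "cc S e j = - e j" using assms by (auto simp: cc_def[OF ns nU ces] cyc_E_def)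
qed

lemma E_S: "d \<in> cyc_E S e \<Longrightarrow> d \<in> S"
  using step0[OF ns nU ces] by (auto simp: cyc_E_def)

lemma minimal_card:
  assumes aE: "\<alpha> \<in> cyc_E S e" and min: "\<forall>\<beta>\<in>cyc_E S e. le_S S \<beta> \<alpha> \<longrightarrow> \<beta> = \<alpha>"
  shows "int (card (Fset (min_gens S) \<alpha>)) = 1 + e \<alpha>"
proof -
  have a2: "\<alpha> \<ge> 2" and anA: "\<alpha> \<notin> min_gens S" using aE by (auto simp: cyc_E_def)
  have aS: "\<alpha> \<in> S" using E_S aE .
  have JE: "{j\<in>{2..\<alpha>}. cc S e j \<noteq> 0} \<subseteq> cyc_E S e" using cc_E by auto
  then have JS: "{j\<in>{2..\<alpha>}. cc S e j \<noteq> 0} \<subseteq> S" using E_S by blast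
  have "int (card (Fset (min_gens S) \<alpha>)) = 1 - cc S e \<alpha>"
  proof (rule card_core[OF a2 aS JS])
    fix \<beta> assume b: "\<beta> \<in> {j\<in>{2..\<alpha>}. cc S e j \<noteq> 0}" "\<beta> \<le> \<alpha>" "\<alpha> - \<beta> \<in> S"
    then have "\<beta> \<in> cyc_E S e" "le_S S \<beta> \<alpha>" using JE by (auto simp: le_S_def)
    then show "\<beta> = \<alpha>" using min by blast
  qed
  then show ?thesis using anA by (simp add: cc_def[OF ns nU ces])
qed

lemma le_S_trans: "le_S S a b \<Longrightarrow> le_S S b c \<Longrightarrow> le_S S a c"
proof -
  assume "le_S S a b" "le_S S b c"
  then have h: "a \<le> b" "b \<le> c" "b - a \<in> S" "c - b \<in> S" by (auto simp: le_S_def)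
  have "(c - b) + (b - a) \<in> S" using h addcl_S[OF ns nU] unfolding addcl_def by blast
  moreover have eq: "c - a = (c - b) + (b - a)" "a \<le> c" using h by auto
  ultimately have "a \<le> c" "c - a \<in> S" by metis+
  then show ?thesis by (simp add: le_S_def)
qed

lemma exists_min: "d \<in> cyc_E S e \<Longrightarrow> \<exists>\<alpha>\<in>cyc_E S e. le_S S \<alpha> d \<and> (\<forall>\<beta>\<in>cyc_E S e. le_S S \<beta> \<alpha> \<longrightarrow> \<beta> = \<alpha>)"
proof (induction d rule: less_induct)
  case (less d)
  show ?case
  proof (cases "\<forall>\<beta>\<in>cyc_E S e. le_S S \<beta> d \<longrightarrow> \<beta> = d")
    case True
    have "le_S S d d" using zero_in[OF ns nU] by (simp add: le_S_def)
    then show ?thesis using True less.prems by blast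
  next
    case False
    then obtain \<beta> where b: "\<beta> \<in> cyc_E S e" "le_S S \<beta> d" "\<beta> \<noteq> d" by blast
    then have "\<beta> < d" by (auto simp: le_S_def)
    then obtain \<alpha> where "\<alpha> \<in> cyc_E S e" "le_S S \<alpha> \<beta>" "\<forall>\<gamma>\<in>cyc_E S e. le_S S \<gamma> \<alpha> \<longrightarrow> \<gamma> = \<alpha>"
      using less.IH b(1) by blast
    then show ?thesis using le_S_trans[OF _ b(2)] by blast
  qed
qed

end

theorem lemma4p5:
  fixes S :: "nat set" and e :: "nat \<Rightarrow> int"
  assumes "numerical_semigroup S"
    and "S \<noteq> UNIV"
    and "cyclotomic_exponent_seq S e"
  shows "(\<forall>d\<in>cyc_E S e. denumerant S d \<ge> 2)
       \<and> (\<forall>\<alpha>\<in>cyc_E S e. (\<forall>\<beta>\<in>cyc_E S e. le_S S \<beta> \<alpha> \<longrightarrow> \<beta> = \<alpha>)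
              \<longrightarrow> e \<alpha> = int (denumerant S \<alpha>) - 1)"
proof (intro conjI ballI impI)
  note ns = assms(1) and nU = assms(2) and ces = assms(3)
  fix \<alpha> assume "\<alpha> \<in> cyc_E S e" "\<forall>\<beta>\<in>cyc_E S e. le_S S \<beta> \<alpha> \<longrightarrow> \<beta> = \<alpha>"
  then show "e \<alpha> = int (denumerant S \<alpha>) - 1"
    using minimal_card[OF ns nU ces] by (simp add: denumerant_Fset)
next
  note ns = assms(1) and nU = assms(2) and ces = assms(3)
  fix d assume d: "d \<in> cyc_E S e"
  then obtain \<alpha> where a: "\<alpha> \<in> cyc_E S e" "le_S S \<alpha> d" "\<forall>\<beta>\<in>cyc_E S e. le_S S \<beta> \<alpha> \<longrightarrow> \<beta> = \<alpha>"
    using exists_min[OF ns nU ces] by blast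
  have c: "int (card (Fset (min_gens S) \<alpha>)) = 1 + e \<alpha>" using minimal_card[OF ns nU ces a(1,3)] .
  have "e \<alpha> \<noteq> 0" using a(1) by (simp add: cyc_E_def)
  moreover have aS: "\<alpha> \<in> S" using E_S[OF ns nU ces a(1)] .
  have "card (Fset (min_gens S) \<alpha>) \<noteq> 0"
    using Fset_ne[OF ns nU aS] finite_Fset[OF finite_gens[OF ns nU] zero_notin_gens[OF ns nU]] by simp
  ultimately have "card (Fset (min_gens S) \<alpha>) \<ge> 2" using c by linarith
  also have "\<dots> \<le> card (Fset (min_gens S) d)" using Fset_mono[OF ns nU a(2) aS] .
  finally show "denumerant S d \<ge> 2" by (simp add: denumerant_Fset)
qed


end
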